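(* If $q$ is a prime power, $n\in\mathbb Z^+$ and $M\cong\mathrm{PG}(n-1,q)$, then $\mathcal T_n(M)$ is a tangle of order $n$ in $M$.
   Context: For a matroid $M$ and $X\subseteq E(M)$, $\lambda_M(X)=r_M(X)+r_M(E(M)-X)-r(M)$; $X$ is $k$-separating if $\lambda_M(X)<k$. For an integer $k$, $\mathcal T_k(M)$ is the collection of $(k-1)$-separating subsets of $E(M)$ that are neither spanning nor cospanning. For $\theta\in\mathbb Z^+$, a collection $\mathcal T$ of subsets of $E(M)$ is a tangle of order $\theta$ if: (i) every set in $\mathcal T$ is $(\theta-1)$-separating, and for each $(\theta-1)$-separating set $X$, either $X\in\mathcal T$ or $E(M)-X\in\mathcal T$; (ii) no three sets in $\mathcal T$ have union $E(M)$; (iii) $E(M)-\{e\}\notin\mathcal T$ for each $e\in E(M)$. *)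

theory Defs
  imports "HOL-Analysis.Finite_Cartesian_Product"
begin

definition matroid :: "'e set \<Rightarrow> ('e set \<Rightarrow> nat) \<Rightarrow> bool" where
  "matroid E r \<longleftrightarrow> finite E \<and>
     (\<forall>X. X \<subseteq> E \<longrightarrow> r X \<le> card X) \<and>
     (\<forall>X Y. X \<subseteq> Y \<and> Y \<subseteq> E \<longrightarrow> r X \<le> r Y) \<and>
     (\<forall>X Y. X \<subseteq> E \<and> Y \<subseteq> E \<longrightarrow> r (X \<union> Y) + r (X \<inter> Y) \<le> r X + r Y)"

definition matroid_iso :: "'e set \<Rightarrow> ('e set \<Rightarrow> nat) \<Rightarrow> 'g set \<Rightarrow> ('g set \<Rightarrow> nat) \<Rightarrow> bool" where
  "matroid_iso E r E' r' \<longleftrightarrow> matroid E r \<and> matroid E' r' \<and>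
     (\<exists>f. bij_betw f E E' \<and> (\<forall>X. X \<subseteq> E \<longrightarrow> r' (f ` X) = r X))"

definition conn :: "'e set \<Rightarrow> ('e set \<Rightarrow> nat) \<Rightarrow> 'e set \<Rightarrow> int" where
  "conn E r X = int (r X) + int (r (E - X)) - int (r E)"

definition k_separating :: "'e set \<Rightarrow> ('e set \<Rightarrow> nat) \<Rightarrow> int \<Rightarrow> 'e set \<Rightarrow> bool" where
  "k_separating E r k X \<longleftrightarrow> X \<subseteq> E \<and> conn E r X < k"

definition spanning :: "'e set \<Rightarrow> ('e set \<Rightarrow> nat) \<Rightarrow> 'e set \<Rightarrow> bool" where
  "spanning E r X \<longleftrightarrow> r X = r E"

definition dual_rank :: "'e set \<Rightarrow> ('e set \<Rightarrow> nat) \<Rightarrow> 'e set \<Rightarrow> nat" where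
  "dual_rank E r X = card X + r (E - X) - r E"

definition cospanning :: "'e set \<Rightarrow> ('e set \<Rightarrow> nat) \<Rightarrow> 'e set \<Rightarrow> bool" where
  "cospanning E r X \<longleftrightarrow> spanning E (dual_rank E r) X"

definition T_sets :: "'e set \<Rightarrow> ('e set \<Rightarrow> nat) \<Rightarrow> int \<Rightarrow> 'e set set" where
  "T_sets E r k = {X. k_separating E r (k - 1) X \<and> \<not> spanning E r X \<and> \<not> cospanning E r X}"

definition tangle :: "'e set \<Rightarrow> ('e set \<Rightarrow> nat) \<Rightarrow> int \<Rightarrow> 'e set set \<Rightarrow> bool" where
  "tangle E r \<theta> \<T> \<longleftrightarrow> \<theta> > 0 \<and>
     (\<forall>X\<in>\<T>. k_separating E r (\<theta> - 1) X) \<and>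
     (\<forall>X. k_separating E r (\<theta> - 1) X \<longrightarrow> X \<in> \<T> \<or> E - X \<in> \<T>) \<and>
     (\<forall>A\<in>\<T>. \<forall>B\<in>\<T>. \<forall>C\<in>\<T>. A \<union> B \<union> C \<noteq> E) \<and>
     (\<forall>e\<in>E. E - {e} \<notin> \<T>)"

text \<open>Vectors of F^n are represented as \<open>'f^'n\<close> with \<open>n = CARD('n)\<close>.\<close>
definition vscale :: "'f::field \<Rightarrow> 'f^'n \<Rightarrow> 'f^'n" where
  "vscale c v = (\<chi> i. c * v $ i)"

definition PG_E :: "('f::field^'n) set set" where
  "PG_E = {module.span vscale {v} | v. v \<noteq> 0}"

definition PG_rank :: "('f::field^'n) set set \<Rightarrow> nat" where
  "PG_rank X = vector_space.dim vscale (\<Union> X)"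

end

theory Submission
  imports Defs "HOL-Analysis.Cartesian_Space"
begin


lemma vscale_eq: "vscale = (*s)"
  by (auto simp: fun_eq_iff vscale_def vector_scalar_mult_def)

lemma PG_rank_eq: "PG_rank X = vec.dim (\<Union>X)"
  unfolding PG_rank_def vscale_eq ..

lemma PG_E_eq: "PG_E = {vec.span {v} | v. v \<noteq> (0::'f::field^'n)}"
  unfolding PG_E_def vscale_eq ..

lemma dim_full_iff: "vec.dim (S::('f::field^'n) set) = CARD('n) \<longleftrightarrow> vec.span S = UNIV"
  using vec.dim_eq_full[of S] by (simp add: vec.dimension_def card_cart_basis)

lemma dim_le_n: "vec.dim (S::('f::field^'n) set) \<le> CARD('n)"
  using vec.dim_subset_UNIV[of S] by (simp add: vec.dimension_def card_cart_basis)

lemma exists_outside: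
  assumes "vec.dim (S::('f::field^'n) set) < CARD('n)"
  shows "\<exists>w. w \<notin> vec.span S"
  using assms dim_full_iff[of S] by auto

lemma line_in_PG: "(v::'f::field^'n) \<noteq> 0 \<Longrightarrow> vec.span {v} \<in> PG_E"
  unfolding PG_E_eq by blast

lemma in_lines:
  assumes "X \<subseteq> PG_E" "(v::'f::field^'n) \<notin> vec.span (\<Union>X)"
  shows "v \<in> \<Union>(PG_E - X)"
proof -
  have "v \<noteq> 0" using assms(2) vec.span_zero by auto
  moreover have "vec.span {v} \<notin> X"
  proof
    assume "vec.span {v} \<in> X"
    then have "v \<in> \<Union>X" using vec.span_base[of v "{v}"] by blast
    then show False using assms(2) vec.span_base by blast
  qed
  ultimately show ?thesis using line_in_PG[of v] vec.span_base[of v "{v}"] by blast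
qed

lemma covered:
  assumes "(v::'f::field^'n) \<noteq> 0 \<Longrightarrow> vec.span {v} \<in> A \<union> B \<union> C"
  shows "v \<in> vec.span (\<Union>A) \<or> v \<in> vec.span (\<Union>B) \<or> v \<in> vec.span (\<Union>C)"
proof (cases "v = 0")
  case True then show ?thesis using vec.span_zero by auto
next
  case False
  then have "vec.span {v} \<in> A \<union> B \<union> C" using assms by blast
  moreover have "v \<in> vec.span {v}" using vec.span_base by blast
  ultimately show ?thesis using vec.span_base by blast
qed

lemma UN_PG: "\<Union>(PG_E :: ('f::field^'n) set set) = UNIV"
proof -
  obtain i :: 'n where True by blast
  have "axis i (1::'f) \<noteq> 0" by (simp add: axis_eq_0_iff)
  have "v \<in> \<Union>(PG_E :: ('f::field^'n) set set)" for v
  proof (cases "v = 0")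
    case True
    then show ?thesis using line_in_PG[OF \<open>axis i (1::'f) \<noteq> 0\<close>] vec.span_zero by blast
  next
    case False
    then show ?thesis using line_in_PG[OF False] vec.span_base[of v "{v}"] by blast
  qed
  then show ?thesis by blast
qed

lemma L1: "PG_rank (PG_E :: ('f::field^'n) set set) = CARD('n)"
  unfolding PG_rank_eq UN_PG using dim_full_iff[of "UNIV::('f^'n) set"] vec.span_UNIV by simp

lemma L2:
  assumes "X \<subseteq> (PG_E :: ('f::field^'n) set set)" "PG_rank X < CARD('n)"
  shows "PG_rank (PG_E - X) = CARD('n)"
proof -
  let ?S = "vec.span (\<Union>X)"
  let ?T = "vec.span (\<Union>(PG_E - X))"
  obtain w where w: "w \<notin> ?S" using exists_outside assms(2) unfolding PG_rank_eq by blast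
  have out: "u \<in> ?T" if "u \<notin> ?S" for u
    by (rule vec.span_base[OF in_lines[OF assms(1) that]])
  have "v \<in> ?T" for v
  proof (cases "v \<in> ?S")
    case False then show ?thesis using out by blast
  next
    case True
    have "v + w \<notin> ?S"
    proof
      assume "v + w \<in> ?S"
      then have "(v + w) - v \<in> ?S" using True vec.span_diff by blast
      then show False using w by simp
    qed
    then have "v + w \<in> ?T" "w \<in> ?T" using out w by auto
    then have "(v + w) - w \<in> ?T" using vec.span_diff by blast
    then show ?thesis by simp
  qed
  then have "?T = UNIV" by blast
  then show ?thesis unfolding PG_rank_eq using dim_full_iff by blast
qed

lemma sub_union2:
  assumes "vec.subspace U" "vec.subspace W" "vec.subspace W'" "U \<subseteq> W \<union> W'"
  shows "U \<subseteq> W \<or> U \<subseteq> W'"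
proof (rule ccontr)
  assume "\<not> ?thesis"
  then obtain a b where a: "a \<in> U" "a \<notin> W" and b: "b \<in> U" "b \<notin> W'" by blast
  then have "a \<in> W'" "b \<in> W" using assms(4) by auto
  have "a + b \<in> U" using a b assms(1) vec.subspace_add by blast
  then have "a + b \<in> W \<or> a + b \<in> W'" using assms(4) by blast
  then show False
  proof
    assume "a + b \<in> W"
    then have "(a + b) - b \<in> W" using \<open>b \<in> W\<close> assms(2) vec.subspace_diff by blast
    then show False using a by simp
  next
    assume "a + b \<in> W'"
    then have "(a + b) - a \<in> W'" using \<open>a \<in> W'\<close> assms(3) vec.subspace_diff by blast
    then show False using b by simp
  qed
qed

lemma three_cover:
  fixes S1 S2 S3 :: "('f::field^'n) set"
  assumes d1: "vec.dim S1 + 2 \<le> CARD('n)" and d2: "vec.dim S2 + 2 \<le> CARD('n)"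
    and d3: "vec.dim S3 + 2 \<le> CARD('n)"
    and cov: "\<And>v. v \<in> vec.span S1 \<or> v \<in> vec.span S2 \<or> v \<in> vec.span S3"
  shows False
proof -
  let ?W1 = "vec.span S1" and ?W2 = "vec.span S2" and ?W3 = "vec.span S3"
  have sp: "vec.subspace ?W1" "vec.subspace ?W2" "vec.subspace ?W3" "vec.subspace (UNIV::('f^'n) set)"
    by (auto simp: vec.subspace_span vec.subspace_UNIV)
  obtain w1 where w1: "w1 \<notin> ?W1" using exists_outside[of S1] d1 by auto
  obtain w2 where w2: "w2 \<notin> ?W2" using exists_outside[of S2] d2 by auto
  obtain w3 where w3: "w3 \<notin> ?W3" using exists_outside[of S3] d3 by auto
  have "\<not> ?W1 \<subseteq> ?W2 \<union> ?W3"
  proof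
    assume "?W1 \<subseteq> ?W2 \<union> ?W3"
    then have "UNIV \<subseteq> ?W2 \<union> ?W3" using cov by blast
    then show False using sub_union2[OF sp(4) sp(2) sp(3)] w2 w3 by blast
  qed
  then obtain x1 where x1: "x1 \<in> ?W1" "x1 \<notin> ?W2" "x1 \<notin> ?W3" by blast
  have "\<not> ?W3 \<subseteq> ?W1 \<union> ?W2"
  proof
    assume "?W3 \<subseteq> ?W1 \<union> ?W2"
    then have "UNIV \<subseteq> ?W1 \<union> ?W2" using cov by blast
    then show False using sub_union2[OF sp(4) sp(1) sp(2)] w1 w2 by blast
  qed
  then obtain x3 where x3: "x3 \<in> ?W3" "x3 \<notin> ?W1" "x3 \<notin> ?W2" by blast
  have "x1 + x3 \<notin> ?W1"
  proof
    assume "x1 + x3 \<in> ?W1"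
    then have "(x1 + x3) - x1 \<in> ?W1" using x1 vec.span_diff by blast
    then show False using x3 by simp
  qed
  moreover have "x1 + x3 \<notin> ?W3"
  proof
    assume "x1 + x3 \<in> ?W3"
    then have "(x1 + x3) - x3 \<in> ?W3" using x3 vec.span_diff by blast
    then show False using x1 by simp
  qed
  ultimately have x13: "x1 + x3 \<in> ?W2" using cov by blast
  have "vec.dim (insert x1 S2) \<le> vec.dim S2 + 1" by (simp add: vec.dim_insert)
  then obtain v where v: "v \<notin> vec.span (insert x1 S2)"
    using exists_outside[of "insert x1 S2"] d2 by force
  have W2sub: "?W2 \<subseteq> vec.span (insert x1 S2)" by (simp add: vec.span_mono subset_insertI)
  have x1in: "x1 \<in> vec.span (insert x1 S2)" by (simp add: vec.span_base)
  have nv: "v \<notin> ?W2" using v W2sub by blast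
  have nv1: "v + x1 \<notin> ?W2"
  proof
    assume "v + x1 \<in> ?W2"
    then have "(v + x1) - x1 \<in> vec.span (insert x1 S2)" using W2sub x1in vec.span_diff by blast
    then show False using v by simp
  qed
  have nv3: "v + x3 \<notin> ?W2"
  proof
    assume "v + x3 \<in> ?W2"
    then have "(v + x3) - (x1 + x3) \<in> ?W2" using x13 vec.span_diff by blast
    then have "(v + x3) - (x1 + x3) + x1 \<in> vec.span (insert x1 S2)"
      using W2sub x1in vec.span_add by blast
    then show False using v by (simp add: algebra_simps)
  qed
  have nv13: "v + x1 + x3 \<notin> ?W2"
  proof
    assume "v + x1 + x3 \<in> ?W2"
    then have "(v + x1 + x3) - (x1 + x3) \<in> ?W2" using x13 vec.span_diff by blast
    then show False using nv by (simp add: algebra_simps)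
  qed
  have both: "v \<in> ?W1 \<and> v \<in> ?W3"
  proof (cases "v \<in> ?W1")
    case True
    have "v + x3 \<notin> ?W1"
    proof
      assume "v + x3 \<in> ?W1"
      then have "(v + x3) - v \<in> ?W1" using True vec.span_diff by blast
      then show False using x3 by simp
    qed
    then have "v + x3 \<in> ?W3" using cov nv3 by blast
    then have "(v + x3) - x3 \<in> ?W3" using x3 vec.span_diff by blast
    then show ?thesis using True by simp
  next
    case False
    then have vW3: "v \<in> ?W3" using cov nv by blast
    have "v + x1 \<notin> ?W3"
    proof
      assume "v + x1 \<in> ?W3"
      then have "(v + x1) - v \<in> ?W3" using vW3 vec.span_diff by blast
      then show False using x1 by simp
    qed
    then have "v + x1 \<in> ?W1" using cov nv1 by blast
    then have "(v + x1) - x1 \<in> ?W1" using x1 vec.span_diff by blast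
    then show ?thesis using False by simp
  qed
  have "v + x1 + x3 \<in> ?W1 \<or> v + x1 + x3 \<in> ?W3" using cov nv13 by blast
  then show False
  proof
    assume "v + x1 + x3 \<in> ?W1"
    then have "(v + x1 + x3) - v - x1 \<in> ?W1" using both x1 vec.span_diff by blast
    then show False using x3 by simp
  next
    assume "v + x1 + x3 \<in> ?W3"
    then have "(v + x1 + x3) - v - x3 \<in> ?W3" using both x3 vec.span_diff by blast
    then show False using x1 by (simp add: algebra_simps)
  qed
qed

lemma L3:
  assumes "A \<union> B \<union> C = (PG_E :: ('f::field^'n) set set)"
    "PG_rank A + 2 \<le> CARD('n)" "PG_rank B + 2 \<le> CARD('n)" "PG_rank C + 2 \<le> CARD('n)"
  shows False
proof -
  have "\<And>v. v \<in> vec.span (\<Union>A) \<or> v \<in> vec.span (\<Union>B) \<or> v \<in> vec.span (\<Union>C)"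
  proof -
    fix v :: "'f^'n"
    have "v \<noteq> 0 \<Longrightarrow> vec.span {v} \<in> A \<union> B \<union> C"
      using assms(1) line_in_PG[of v] by simp
    then show "v \<in> vec.span (\<Union>A) \<or> v \<in> vec.span (\<Union>B) \<or> v \<in> vec.span (\<Union>C)"
      by (rule covered)
  qed
  then show False using three_cover[of "\<Union>A" "\<Union>B" "\<Union>C"] assms(2-4) unfolding PG_rank_eq by blast
qed



theorem lemma6p3:
  fixes E :: "'e set" and r :: "'e set \<Rightarrow> nat"
  assumes "matroid_iso E r (PG_E :: ('f::{field,finite}^'n) set set) PG_rank"
  shows "tangle E r (int CARD('n)) (T_sets E r (int CARD('n)))"
proof -
  define n where "n = CARD('n)"
  define P where "P = (PG_E :: ('f::{field,finite}^'n) set set)"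
  have m: "matroid E r" using assms unfolding matroid_iso_def by blast
  obtain f where f: "bij_betw f E P" and fr: "\<And>X. X \<subseteq> E \<Longrightarrow> PG_rank (f ` X) = r X"
    using assms unfolding matroid_iso_def P_def by blast
  have fin: "finite E" and rc: "\<And>X. X \<subseteq> E \<Longrightarrow> r X \<le> card X"
    and rm: "\<And>X Y. X \<subseteq> Y \<Longrightarrow> Y \<subseteq> E \<Longrightarrow> r X \<le> r Y"
    and rs: "\<And>X Y. X \<subseteq> E \<Longrightarrow> Y \<subseteq> E \<Longrightarrow> r (X \<union> Y) + r (X \<inter> Y) \<le> r X + r Y"
    using m unfolding matroid_def by auto
  have fE: "f ` E = P" using f by (simp add: bij_betw_def)
  have inj: "inj_on f E" using f by (simp add: bij_betw_def)
  have L1': "PG_rank P = n" unfolding P_def n_def by (rule L1)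
  have R1: "r E = n"
    using fr[of E] fE L1' by simp
  have R2: "r (E - X) = n" if "X \<subseteq> E" "r X < n" for X
  proof -
    have "f ` (E - X) = P - f ` X" using inj that(1) fE by (simp add: inj_on_image_set_diff)
    moreover have "f ` X \<subseteq> P" using that(1) fE by blast
    moreover have "PG_rank (f ` X) < CARD('n)" using fr[OF that(1)] that(2) unfolding n_def by simp
    ultimately have "PG_rank (f ` (E - X)) = CARD('n)" using L2[of "f ` X"] unfolding P_def by simp
    then show ?thesis using fr[of "E - X"] unfolding n_def by simp
  qed
  have R3: False if "A \<subseteq> E" "B \<subseteq> E" "C \<subseteq> E" "A \<union> B \<union> C = E"
    "r A + 2 \<le> n" "r B + 2 \<le> n" "r C + 2 \<le> n" for A B C
  proof -
    have "f ` A \<union> f ` B \<union> f ` C = P" using that(4) fE by (simp add: image_Un[symmetric])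
    moreover have "PG_rank (f ` A) + 2 \<le> CARD('n)" using fr[OF that(1)] that(5) unfolding n_def by simp
    moreover have "PG_rank (f ` B) + 2 \<le> CARD('n)" using fr[OF that(2)] that(6) unfolding n_def by simp
    moreover have "PG_rank (f ` C) + 2 \<le> CARD('n)" using fr[OF that(3)] that(7) unfolding n_def by simp
    ultimately show False using L3[of "f ` A" "f ` B" "f ` C"] unfolding P_def by blast
  qed
  have r0: "r {} = 0" using rc[of "{}"] by simp
  have rle: "r X \<le> n" if "X \<subseteq> E" for X using rm[OF that] R1 by simp
  have rins: "r (insert e Y) \<le> r Y + 1" if "Y \<subseteq> E" "e \<in> E" for e Y
  proof -
    have "r (Y \<union> {e}) + r (Y \<inter> {e}) \<le> r Y + r {e}" using rs[of Y "{e}"] that by simp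
    moreover have "r {e} \<le> 1" using rc[of "{e}"] that by simp
    ultimately show ?thesis by simp
  qed
  have key: "Y \<in> T_sets E r (int n) \<longleftrightarrow> r Y + 2 \<le> n" if Y: "Y \<subseteq> E" for Y
  proof
    assume "Y \<in> T_sets E r (int n)"
    then have c: "conn E r Y < int n - 1" and ns: "r Y \<noteq> n"
      unfolding T_sets_def k_separating_def spanning_def using R1 by auto
    then have "r Y < n" using rle[OF Y] by simp
    then have "r (E - Y) = n" using R2 Y by blast
    then show "r Y + 2 \<le> n" using c R1 unfolding conn_def by simp
  next
    assume a: "r Y + 2 \<le> n"
    then have rEY: "r (E - Y) = n" using R2 Y by simp
    have "conn E r Y < int n - 1" using a rEY R1 unfolding conn_def by simp
    moreover have "\<not> spanning E r Y" using a R1 unfolding spanning_def by simp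
    moreover have "\<not> cospanning E r Y"
    proof
      assume "cospanning E r Y"
      then have cY: "card Y = card E - n"
        unfolding cospanning_def spanning_def dual_rank_def using rEY R1 r0 by simp
      have "n \<le> card E" using rc[of E] R1 by simp
      moreover have "card Y \<le> card E" using Y fin by (simp add: card_mono)
      ultimately have cEY: "card (E - Y) = n" using cY Y fin by (simp add: card_Diff_subset finite_subset)
      then have "card (E - Y) \<ge> 2" using a by simp
      then have "E - Y \<noteq> {}" by (metis card.empty not_numeral_le_zero)
      then obtain e where e: "e \<in> E" "e \<notin> Y" by blast
      have "card (E - Y - {e}) = n - 1" using cEY e fin by simp
      then have "r (E - Y - {e}) < n" using rc[of "E - Y - {e}"] a by force
      then have "r (E - (E - Y - {e})) = n" using R2[of "E - Y - {e}"] by blast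
      moreover have "E - (E - Y - {e}) = insert e Y" using Y e by blast
      ultimately have "r (insert e Y) = n" by simp
      then show False using rins[OF Y e(1)] a by simp
    qed
    ultimately show "Y \<in> T_sets E r (int n)"
      unfolding T_sets_def k_separating_def using Y by simp
  qed
  have Tsub: "Y \<subseteq> E" if "Y \<in> T_sets E r (int n)" for Y
    using that unfolding T_sets_def k_separating_def by simp
  have "int n > 0" unfolding n_def by simp
  moreover have "\<forall>X\<in>T_sets E r (int n). k_separating E r (int n - 1) X"
    unfolding T_sets_def by simp
  moreover have "\<forall>X. k_separating E r (int n - 1) X \<longrightarrow> X \<in> T_sets E r (int n) \<or> E - X \<in> T_sets E r (int n)"
  proof (intro allI impI)
    fix X assume "k_separating E r (int n - 1) X"
    then have X: "X \<subseteq> E" and c: "conn E r X < int n - 1" unfolding k_separating_def by auto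
    show "X \<in> T_sets E r (int n) \<or> E - X \<in> T_sets E r (int n)"
    proof (cases "r X < n")
      case True
      then have "r (E - X) = n" using R2[OF X] by blast
      then have "r X + 2 \<le> n" using c R1 unfolding conn_def by simp
      then show ?thesis using key[OF X] by blast
    next
      case False
      then have "r X = n" using rle X by (simp add: le_antisym)
      then have "r (E - X) + 2 \<le> n" using c R1 unfolding conn_def by simp
      then show ?thesis using key[of "E - X"] by blast
    qed
  qed
  moreover have "\<forall>A\<in>T_sets E r (int n). \<forall>B\<in>T_sets E r (int n). \<forall>C\<in>T_sets E r (int n). A \<union> B \<union> C \<noteq> E"
  proof (intro ballI)
    fix A B C assume "A \<in> T_sets E r (int n)" "B \<in> T_sets E r (int n)" "C \<in> T_sets E r (int n)"
    moreover have "A \<subseteq> E" "B \<subseteq> E" "C \<subseteq> E" using calculation Tsub by auto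
    ultimately have "r A + 2 \<le> n" "r B + 2 \<le> n" "r C + 2 \<le> n" using key[of A] key[of B] key[of C] by auto
    then show "A \<union> B \<union> C \<noteq> E" using R3[of A B C] \<open>A \<subseteq> E\<close> \<open>B \<subseteq> E\<close> \<open>C \<subseteq> E\<close> by blast
  qed
  moreover have "\<forall>e\<in>E. E - {e} \<notin> T_sets E r (int n)"
  proof (intro ballI notI)
    fix e assume e: "e \<in> E" and "E - {e} \<in> T_sets E r (int n)"
    then have a: "r (E - {e}) + 2 \<le> n" using key[of "E - {e}"] by simp
    then have "r (E - (E - {e})) = n" using R2[of "E - {e}"] by simp
    moreover have "E - (E - {e}) = {e}" using e by blast
    moreover have "r {e} \<le> 1" using rc[of "{e}"] e by simp
    ultimately show False using a by simp
  qed
  ultimately have "tangle E r (int n) (T_sets E r (int n))"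
    unfolding tangle_def by (intro conjI)
  then show ?thesis unfolding n_def .
qed

end
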